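(* Let $\mathcal M_1=\langle W_1,\le_1,v_1,D_1,\phi_1\rangle$ and $\mathcal M_2=\langle W_2,\le_2,v_2,D_2,\phi_2\rangle$ be G-models for the same relational language, and let $Z$ be a CD-asimulation between $\mathcal M_1$ and $\mathcal M_2$. Let $A[x_1,\dots,x_k]$ be a formula whose free variables are among $x_1,\dots,x_k$, let $\{i,j\}=\{1,2\}$, $t\in W_i$, $\vec d\in D_i^k$, $u\in W_j$, $\vec e\in D_j^k$. If $(t,\vec d)\,Z\,(u,\vec e)$ and $t\Vdash_i A[\vec d]$, then $u\Vdash_j A[\vec e]$.
   Context: Formulas are built from atomic formulas $P x_{l_1}\dots x_{l_m}$ with $\wedge,\vee,\rightarrow,\perp,\forall,\exists$. A G-model is $\mathcal{M}=\langle W,\le,v_0,D,\phi\rangle$: $W$ a nonempty set of states, $\le$ a reflexive transitive relation on $W$, $v_0\in W$ with $v_0\le v$ for all $v\in W$, $D$ a nonempty domain, and for each $k$-ary predicate symbol $P$ a set $\phi(P)\subseteq W\times D^k$ that is monotone: if $v\le w$ and $\langle v,a_1,\dots,a_k\rangle\in\phi(P)$ then $\langle w,a_1,\dots,a_k\rangle\in\phi(P)$. Forcing $\Vdash$ between states and sentences with constants for elements of $D$: atomic $P\mathbf a_1\dots\mathbf a_k$ forced at $v$ iff $\langle v,a_1,\dots,a_k\rangle\in\phi(P)$; $\wedge,\vee$ pointwise; $v\Vdash A\rightarrow B$ iff for all $w\ge v$, $w\Vdash A$ implies $w\Vdash B$; $\perp$ never forced; $\exists x A$ (resp. $\forall xA$)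 forced at $v$ iff $A[\mathbf a/x]$ is forced at $v$ for some (resp. every) $a\in D$. $A[\vec d]$ denotes $A$ with $x_l$ replaced by the constant for $d_l$; $\Vdash_i$ is forcing in $\mathcal M_i$. A CD-asimulation between $\mathcal M_1$ and $\mathcal M_2$ is a relation $Z\subseteq\bigcup_{k\ge0}[(W_1\times D_1^k)\times(W_2\times D_2^k)]\cup[(W_2\times D_2^k)\times(W_1\times D_1^k)]$ such that for all $\{i,j\}=\{1,2\}$: (1) if $(v,\vec d)Z(w,\vec e)$ with $v\in W_i$, and $v\Vdash_i P[\vec d]$ for an atomic formula $P[\vec x]$ with free variables among $x_1,\dots,x_k$, then $w\Vdash_j P[\vec e]$; (2) if $(t,\vec d)Z(u,\vec e)$ with $t\in W_i$, $u\in W_j$, and $u\le_j v$, then there is $w\in W_i$ with $t\le_i w$, $(w,\vec d)Z(v,\vec e)$ and $(v,\vec e)Z(w,\vec d)$; (3) if $t\in W_i$, $(t,\vec d)Z(u,\vec e)$ and $f\in D_i$, then there is $g\in D_j$ with $(t,\vec d f)Z(u,\vec e g)$; (4) if $t\in W_i$, $(t,\vec d)Z(u,\vec e)$ and $g\in D_j$, then there is $f\in D_i$ with $(t,\vec d f)Z(u,\vec e g)$. Here $\vec d f$ denotes the sequence $\vec d$ extended by $f$. *)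

theory Defs
  imports Main
begin

(* First-order formulas over predicate symbols 'p.  Variables are x_0, x_1, ...
   (indexed by nat); Atom P [l1,...,lm] is the atomic formula P x_l1 ... x_lm. *)
datatype 'p fm =
    Atom 'p "nat list"
  | Conj "'p fm" "'p fm"
  | Disj "'p fm" "'p fm"
  | Imp "'p fm" "'p fm"
  | Bot
  | All nat "'p fm"
  | Ex nat "'p fm"

fun fv :: "'p fm \<Rightarrow> nat set" where
  "fv (Atom P ls) = set ls"
| "fv (Conj A B) = fv A \<union> fv B"
| "fv (Disj A B) = fv A \<union> fv B"
| "fv (Imp A B) = fv A \<union> fv B"
| "fv Bot = {}"
| "fv (All x A) = fv A - {x}"
| "fv (Ex x A) = fv A - {x}"

fun wf_fm :: "('p \<Rightarrow> nat) \<Rightarrow> 'p fm \<Rightarrow> bool" where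
  "wf_fm ar (Atom P ls) = (length ls = ar P)"
| "wf_fm ar (Conj A B) = (wf_fm ar A \<and> wf_fm ar B)"
| "wf_fm ar (Disj A B) = (wf_fm ar A \<and> wf_fm ar B)"
| "wf_fm ar (Imp A B) = (wf_fm ar A \<and> wf_fm ar B)"
| "wf_fm ar Bot = True"
| "wf_fm ar (All x A) = wf_fm ar A"
| "wf_fm ar (Ex x A) = wf_fm ar A"

(* G-model <W, \<le>, v0, D, \<phi>>; \<phi> P is the set of (v, [a1..ak]) in W \<times> D^k *)
record ('w, 'd, 'p) gmodel =
  W :: "'w set"
  le :: "'w \<Rightarrow> 'w \<Rightarrow> bool"
  root :: 'w
  Dom :: "'d set"
  phi :: "'p \<Rightarrow> 'w \<Rightarrow> 'd list \<Rightarrow> bool"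

definition is_gmodel :: "('p \<Rightarrow> nat) \<Rightarrow> ('w, 'd, 'p) gmodel \<Rightarrow> bool" where
  "is_gmodel ar M \<longleftrightarrow>
     W M \<noteq> {} \<and>
     (\<forall>v w. le M v w \<longrightarrow> v \<in> W M \<and> w \<in> W M) \<and>
     (\<forall>v\<in>W M. le M v v) \<and>
     (\<forall>u\<in>W M. \<forall>v\<in>W M. \<forall>w\<in>W M. le M u v \<longrightarrow> le M v w \<longrightarrow> le M u w) \<and>
     root M \<in> W M \<and> (\<forall>v\<in>W M. le M (root M) v) \<and>
     Dom M \<noteq> {} \<and>
     (\<forall>P v ds. phi M P v ds \<longrightarrow> v \<in> W M \<and> set ds \<subseteq> Dom M \<and> length ds = ar P) \<and>
     (\<forall>P v w ds. le M v w \<longrightarrow> phi M P v ds \<longrightarrow> phi M P w ds)"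

(* Forcing.  A sentence A[d] with constants is represented by A together with the
   assignment \<sigma> of domain elements to its free variables. *)
fun force :: "('w, 'd, 'p) gmodel \<Rightarrow> 'w \<Rightarrow> (nat \<Rightarrow> 'd) \<Rightarrow> 'p fm \<Rightarrow> bool" where
  "force M v \<sigma> (Atom P ls) = phi M P v (map \<sigma> ls)"
| "force M v \<sigma> (Conj A B) = (force M v \<sigma> A \<and> force M v \<sigma> B)"
| "force M v \<sigma> (Disj A B) = (force M v \<sigma> A \<or> force M v \<sigma> B)"
| "force M v \<sigma> (Imp A B) =
     (\<forall>w\<in>W M. le M v w \<longrightarrow> force M w \<sigma> A \<longrightarrow> force M w \<sigma> B)"
| "force M v \<sigma> Bot = False"
| "force M v \<sigma> (All x A) = (\<forall>a\<in>Dom M. force M v (\<sigma>(x := a)) A)"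
| "force M v \<sigma> (Ex x A) = (\<exists>a\<in>Dom M. force M v (\<sigma>(x := a)) A)"

(* v \<Vdash> A[d1,...,dk]: x_l is interpreted by the l-th entry of ds (0-indexed) *)
definition forces :: "('w, 'd, 'p) gmodel \<Rightarrow> 'w \<Rightarrow> 'p fm \<Rightarrow> 'd list \<Rightarrow> bool" where
  "forces M v A ds = force M v (\<lambda>l. ds ! l) A"

(* The clauses (1)-(4) of a CD-asimulation for one fixed ordered pair (i,j).
   Zij relates (W_i \<times> D_i^k) to (W_j \<times> D_j^k), Zji the reverse direction. *)
definition asim_half ::
  "('p \<Rightarrow> nat) \<Rightarrow> ('w1, 'd1, 'p) gmodel \<Rightarrow> ('w2, 'd2, 'p) gmodel
   \<Rightarrow> ('w1 \<Rightarrow> 'd1 list \<Rightarrow> 'w2 \<Rightarrow> 'd2 list \<Rightarrow> bool)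
   \<Rightarrow> ('w2 \<Rightarrow> 'd2 list \<Rightarrow> 'w1 \<Rightarrow> 'd1 list \<Rightarrow> bool) \<Rightarrow> bool" where
  "asim_half ar Mi Mj Zij Zji \<longleftrightarrow>
     (\<forall>t ds u es. Zij t ds u es \<longrightarrow>
        t \<in> W Mi \<and> set ds \<subseteq> Dom Mi \<and> u \<in> W Mj \<and> set es \<subseteq> Dom Mj
        \<and> length ds = length es) \<and>
     \<comment> \<open>(1)\<close>
     (\<forall>v ds w es P ls. Zij v ds w es \<longrightarrow> wf_fm ar (Atom P ls) \<longrightarrow>
        fv (Atom P ls) \<subseteq> {..<length ds} \<longrightarrow>
        forces Mi v (Atom P ls) ds \<longrightarrow> forces Mj w (Atom P ls) es) \<and>
     \<comment> \<open>(2)\<close>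
     (\<forall>t ds u es v. Zij t ds u es \<longrightarrow> v \<in> W Mj \<longrightarrow> le Mj u v \<longrightarrow>
        (\<exists>w\<in>W Mi. le Mi t w \<and> Zij w ds v es \<and> Zji v es w ds)) \<and>
     \<comment> \<open>(3)\<close>
     (\<forall>t ds u es f. Zij t ds u es \<longrightarrow> f \<in> Dom Mi \<longrightarrow>
        (\<exists>g\<in>Dom Mj. Zij t (ds @ [f]) u (es @ [g]))) \<and>
     \<comment> \<open>(4)\<close>
     (\<forall>t ds u es g. Zij t ds u es \<longrightarrow> g \<in> Dom Mj \<longrightarrow>
        (\<exists>f\<in>Dom Mi. Zij t (ds @ [f]) u (es @ [g])))"

(* Z = Z12 \<union> Z21 is a CD-asimulation between M1 and M2 *)
definition cd_asimulation ::
  "('p \<Rightarrow> nat) \<Rightarrow> ('w1, 'd1, 'p) gmodel \<Rightarrow> ('w2, 'd2, 'p) gmodel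
   \<Rightarrow> ('w1 \<Rightarrow> 'd1 list \<Rightarrow> 'w2 \<Rightarrow> 'd2 list \<Rightarrow> bool)
   \<Rightarrow> ('w2 \<Rightarrow> 'd2 list \<Rightarrow> 'w1 \<Rightarrow> 'd1 list \<Rightarrow> bool) \<Rightarrow> bool" where
  "cd_asimulation ar M1 M2 Z12 Z21 \<longleftrightarrow>
     asim_half ar M1 M2 Z12 Z21 \<and> asim_half ar M2 M1 Z21 Z12"

end

theory Submission
  imports Defs
begin

lemma gen:
  assumes H1: "asim_half ar M1 M2 Z12 Z21" and H2: "asim_half ar M2 M1 Z21 Z12"
  and wf: "wf_fm ar A"
  shows "   (\<forall>t ds u es \<sigma>1 \<sigma>2 \<pi>. Z12 t ds u es \<longrightarrow>
      (\<forall>y\<in>fv A. \<pi> y < length ds \<and> \<sigma>1 y = ds ! \<pi> y \<and> \<sigma>2 y = es ! \<pi> y) \<longrightarrow>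
      force M1 t \<sigma>1 A \<longrightarrow> force M2 u \<sigma>2 A) \<and>
   (\<forall>t es u ds \<sigma>2 \<sigma>1 \<pi>. Z21 t es u ds \<longrightarrow>
      (\<forall>y\<in>fv A. \<pi> y < length es \<and> \<sigma>2 y = es ! \<pi> y \<and> \<sigma>1 y = ds ! \<pi> y) \<longrightarrow>
      force M2 t \<sigma>2 A \<longrightarrow> force M1 u \<sigma>1 A)"
proof -
  have len12: "\<And>t ds u es. Z12 t ds u es \<Longrightarrow> length ds = length es"
    using H1[unfolded asim_half_def, THEN conjunct1] by blast
  have up12: "\<And>t ds u es v. Z12 t ds u es \<Longrightarrow> v \<in> W M2 \<Longrightarrow> le M2 u v \<Longrightarrow>
        (\<exists>w\<in>W M1. le M1 t w \<and> Z12 w ds v es \<and> Z21 v es w ds)"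
    using H1[unfolded asim_half_def, THEN conjunct2, THEN conjunct2, THEN conjunct1] by blast
  have ex12: "\<And>t ds u es f. Z12 t ds u es \<Longrightarrow> f \<in> Dom M1 \<Longrightarrow>
        (\<exists>g\<in>Dom M2. Z12 t (ds @ [f]) u (es @ [g]))"
    using H1[unfolded asim_half_def, THEN conjunct2, THEN conjunct2, THEN conjunct2, THEN conjunct1] by blast
  have all12: "\<And>t ds u es g. Z12 t ds u es \<Longrightarrow> g \<in> Dom M2 \<Longrightarrow>
        (\<exists>f\<in>Dom M1. Z12 t (ds @ [f]) u (es @ [g]))"
    using H1[unfolded asim_half_def, THEN conjunct2, THEN conjunct2, THEN conjunct2, THEN conjunct2] by blast
  have len21: "\<And>t ds u es. Z21 t es u ds \<Longrightarrow> length es = length ds"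
    using H2[unfolded asim_half_def, THEN conjunct1] by blast
  have up21: "\<And>t ds u es v. Z21 t es u ds \<Longrightarrow> v \<in> W M1 \<Longrightarrow> le M1 u v \<Longrightarrow>
        (\<exists>w\<in>W M2. le M2 t w \<and> Z21 w es v ds \<and> Z12 v ds w es)"
    using H2[unfolded asim_half_def, THEN conjunct2, THEN conjunct2, THEN conjunct1] by blast
  have ex21: "\<And>t ds u es f. Z21 t es u ds \<Longrightarrow> f \<in> Dom M2 \<Longrightarrow>
        (\<exists>g\<in>Dom M1. Z21 t (es @ [f]) u (ds @ [g]))"
    using H2[unfolded asim_half_def, THEN conjunct2, THEN conjunct2, THEN conjunct2, THEN conjunct1] by blast
  have all21: "\<And>t ds u es g. Z21 t es u ds \<Longrightarrow> g \<in> Dom M1 \<Longrightarrow>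
        (\<exists>f\<in>Dom M2. Z21 t (es @ [f]) u (ds @ [g]))"
    using H2[unfolded asim_half_def, THEN conjunct2, THEN conjunct2, THEN conjunct2, THEN conjunct2] by blast
  show ?thesis using wf
proof (induction A)
  case (Atom P ls)
  have a1: "\<And>t ds u es \<sigma>1 \<sigma>2 \<pi>. Z12 t ds u es \<Longrightarrow>
      (\<forall>y\<in>set ls. \<pi> y < length ds \<and> \<sigma>1 y = ds ! \<pi> y \<and> \<sigma>2 y = es ! \<pi> y) \<Longrightarrow>
      phi M1 P t (map \<sigma>1 ls) \<Longrightarrow> phi M2 P u (map \<sigma>2 ls)"
  proof -
    fix t ds u es \<sigma>1 \<sigma>2 \<pi>
    assume z: "Z12 t ds u es" and c: "\<forall>y\<in>set ls. \<pi> y < length ds \<and> \<sigma>1 y = ds ! \<pi> y \<and> \<sigma>2 y = es ! \<pi> y"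
      and p: "phi M1 P t (map \<sigma>1 ls)"
    have m1: "map \<sigma>1 ls = map (\<lambda>l. ds ! l) (map \<pi> ls)" using c by auto
    have m2: "map \<sigma>2 ls = map (\<lambda>l. es ! l) (map \<pi> ls)" using c by auto
    have "forces M1 t (Atom P (map \<pi> ls)) ds" using p m1 by (simp add: forces_def)
    moreover have "wf_fm ar (Atom P (map \<pi> ls))" using Atom by simp
    moreover have "fv (Atom P (map \<pi> ls)) \<subseteq> {..<length ds}" using c by auto
    ultimately have "forces M2 u (Atom P (map \<pi> ls)) es" using H1[unfolded asim_half_def, THEN conjunct2, THEN conjunct1] z by blast
    then show "phi M2 P u (map \<sigma>2 ls)" unfolding m2 forces_def force.simps .
  qed
  have a2: "\<And>t es u ds \<sigma>2 \<sigma>1 \<pi>. Z21 t es u ds \<Longrightarrow>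
      (\<forall>y\<in>set ls. \<pi> y < length es \<and> \<sigma>2 y = es ! \<pi> y \<and> \<sigma>1 y = ds ! \<pi> y) \<Longrightarrow>
      phi M2 P t (map \<sigma>2 ls) \<Longrightarrow> phi M1 P u (map \<sigma>1 ls)"
  proof -
    fix t ds u es \<sigma>1 \<sigma>2 \<pi>
    assume z: "Z21 t es u ds" and c: "\<forall>y\<in>set ls. \<pi> y < length es \<and> \<sigma>2 y = es ! \<pi> y \<and> \<sigma>1 y = ds ! \<pi> y"
      and p: "phi M2 P t (map \<sigma>2 ls)"
    have m1: "map \<sigma>1 ls = map (\<lambda>l. ds ! l) (map \<pi> ls)" using c by auto
    have m2: "map \<sigma>2 ls = map (\<lambda>l. es ! l) (map \<pi> ls)" using c by auto
    have "forces M2 t (Atom P (map \<pi> ls)) es" using p m2 by (simp add: forces_def)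
    moreover have "wf_fm ar (Atom P (map \<pi> ls))" using Atom by simp
    moreover have "fv (Atom P (map \<pi> ls)) \<subseteq> {..<length es}" using c by auto
    ultimately have "forces M1 u (Atom P (map \<pi> ls)) ds" using H2[unfolded asim_half_def, THEN conjunct2, THEN conjunct1] z by blast
    then show "phi M1 P u (map \<sigma>1 ls)" unfolding m1 forces_def force.simps .
  qed
  show ?case unfolding fv.simps force.simps using a1 a2 by blast
next
  case (Conj A B)
  have wA: "wf_fm ar A" and wB: "wf_fm ar B" using Conj.prems by auto
  note IA = Conj.IH(1)[OF wA] and IB = Conj.IH(2)[OF wB]
  show ?case unfolding fv.simps force.simps ball_Un
  proof (rule conjI; intro allI impI)
    fix t ds u es \<sigma>1 \<sigma>2 \<pi>
    assume "Z12 t ds u es"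
      "(\<forall>y\<in>fv A. \<pi> y < length ds \<and> \<sigma>1 y = ds ! \<pi> y \<and> \<sigma>2 y = es ! \<pi> y) \<and> (\<forall>y\<in>fv B. \<pi> y < length ds \<and> \<sigma>1 y = ds ! \<pi> y \<and> \<sigma>2 y = es ! \<pi> y)"
      "force M1 t \<sigma>1 A \<and> force M1 t \<sigma>1 B"
    then show "force M2 u \<sigma>2 A \<and> force M2 u \<sigma>2 B" using IA[THEN conjunct1, rule_format] IB[THEN conjunct1, rule_format] by blast
  next
    fix t es u ds \<sigma>2 \<sigma>1 \<pi>
    assume "Z21 t es u ds"
      "(\<forall>y\<in>fv A. \<pi> y < length es \<and> \<sigma>2 y = es ! \<pi> y \<and> \<sigma>1 y = ds ! \<pi> y) \<and> (\<forall>y\<in>fv B. \<pi> y < length es \<and> \<sigma>2 y = es ! \<pi> y \<and> \<sigma>1 y = ds ! \<pi> y)"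
      "force M2 t \<sigma>2 A \<and> force M2 t \<sigma>2 B"
    then show "force M1 u \<sigma>1 A \<and> force M1 u \<sigma>1 B" using IA[THEN conjunct2, rule_format] IB[THEN conjunct2, rule_format] by blast
  qed
next
  case (Disj A B)
  have wA: "wf_fm ar A" and wB: "wf_fm ar B" using Disj.prems by auto
  note IA = Disj.IH(1)[OF wA] and IB = Disj.IH(2)[OF wB]
  show ?case unfolding fv.simps force.simps ball_Un
  proof (rule conjI; intro allI impI)
    fix t ds u es \<sigma>1 \<sigma>2 \<pi>
    assume "Z12 t ds u es"
      "(\<forall>y\<in>fv A. \<pi> y < length ds \<and> \<sigma>1 y = ds ! \<pi> y \<and> \<sigma>2 y = es ! \<pi> y) \<and> (\<forall>y\<in>fv B. \<pi> y < length ds \<and> \<sigma>1 y = ds ! \<pi> y \<and> \<sigma>2 y = es ! \<pi> y)"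
      "force M1 t \<sigma>1 A \<or> force M1 t \<sigma>1 B"
    then show "force M2 u \<sigma>2 A \<or> force M2 u \<sigma>2 B" using IA[THEN conjunct1, rule_format] IB[THEN conjunct1, rule_format] by blast
  next
    fix t es u ds \<sigma>2 \<sigma>1 \<pi>
    assume "Z21 t es u ds"
      "(\<forall>y\<in>fv A. \<pi> y < length es \<and> \<sigma>2 y = es ! \<pi> y \<and> \<sigma>1 y = ds ! \<pi> y) \<and> (\<forall>y\<in>fv B. \<pi> y < length es \<and> \<sigma>2 y = es ! \<pi> y \<and> \<sigma>1 y = ds ! \<pi> y)"
      "force M2 t \<sigma>2 A \<or> force M2 t \<sigma>2 B"
    then show "force M1 u \<sigma>1 A \<or> force M1 u \<sigma>1 B" using IA[THEN conjunct2, rule_format] IB[THEN conjunct2, rule_format] by blast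
  qed
next
  case Bot then show ?case by simp
next
  case (Imp A B)
  have wA: "wf_fm ar A" and wB: "wf_fm ar B" using Imp.prems by auto
  note IA = Imp.IH(1)[OF wA] and IB = Imp.IH(2)[OF wB]
  have d1: "force M2 u \<sigma>2 (Imp A B)"
    if z: "Z12 t ds u es" and c: "\<forall>y\<in>fv (Imp A B). \<pi> y < length ds \<and> \<sigma>1 y = ds ! \<pi> y \<and> \<sigma>2 y = es ! \<pi> y"
      and f: "force M1 t \<sigma>1 (Imp A B)" for t ds u es \<sigma>1 \<sigma>2 \<pi>
  proof -
    have len: "length ds = length es" using z len12 by blast
    show ?thesis
    proof (simp, intro ballI impI)
      fix w assume w: "w \<in> W M2" "le M2 u w" "force M2 w \<sigma>2 A"
      obtain w' where w': "w' \<in> W M1" "le M1 t w'" "Z12 w' ds w es" "Z21 w es w' ds"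
        using up12 z w by blast
      have "force M1 w' \<sigma>1 A" using IA[THEN conjunct2, rule_format, of w es w' ds \<pi> "\<sigma>2" "\<sigma>1"] w'(4) w(3) c len by auto
      then have "force M1 w' \<sigma>1 B" using f w' by auto
      then show "force M2 w \<sigma>2 B" using IB[THEN conjunct1, rule_format, of w' ds w es \<pi> "\<sigma>1" "\<sigma>2"] w'(3) c by auto
    qed
  qed
  have d2: "force M1 u \<sigma>1 (Imp A B)"
    if z: "Z21 t es u ds" and c: "\<forall>y\<in>fv (Imp A B). \<pi> y < length es \<and> \<sigma>2 y = es ! \<pi> y \<and> \<sigma>1 y = ds ! \<pi> y"
      and f: "force M2 t \<sigma>2 (Imp A B)" for t ds u es \<sigma>1 \<sigma>2 \<pi>
  proof -
    have len: "length ds = length es" using z len21 by metis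
    show ?thesis
    proof (simp, intro ballI impI)
      fix w assume w: "w \<in> W M1" "le M1 u w" "force M1 w \<sigma>1 A"
      obtain w' where w': "w' \<in> W M2" "le M2 t w'" "Z21 w' es w ds" "Z12 w ds w' es"
        using up21 z w by blast
      have "force M2 w' \<sigma>2 A" using IA[THEN conjunct1, rule_format, of w ds w' es \<pi> "\<sigma>1" "\<sigma>2"] w'(4) w(3) c len by auto
      then have "force M2 w' \<sigma>2 B" using f w' by auto
      then show "force M1 w \<sigma>1 B" using IB[THEN conjunct2, rule_format, of w' es w ds \<pi> "\<sigma>2" "\<sigma>1"] w'(3) c by auto
    qed
  qed
  show ?case using d1 d2 by blast
next
  case (All x A)
  have wA: "wf_fm ar A" using All.prems by auto
  note IA = All.IH[OF wA]
  have d1: "force M2 u \<sigma>2 (All x A)"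
    if z: "Z12 t ds u es" and c: "\<forall>y\<in>fv (All x A). \<pi> y < length ds \<and> \<sigma>1 y = ds ! \<pi> y \<and> \<sigma>2 y = es ! \<pi> y"
      and f: "force M1 t \<sigma>1 (All x A)" for t ds u es \<sigma>1 \<sigma>2 \<pi>
  proof -
    have len: "length ds = length es" using z len12 by blast
    show ?thesis
    proof (simp, intro ballI)
      fix g assume g: "g \<in> Dom M2"
      obtain f' where f': "f' \<in> Dom M1" "Z12 t (ds @ [f']) u (es @ [g])" using all12 z g by blast
      have c': "\<forall>y\<in>fv A. (\<pi>(x := length ds)) y < length (ds @ [f']) \<and> (\<sigma>1(x:=f')) y = (ds @ [f']) ! (\<pi>(x := length ds)) y
          \<and> (\<sigma>2(x:=g)) y = (es @ [g]) ! (\<pi>(x := length ds)) y"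
        proof
          fix y assume "y \<in> fv A"
          then show "(\<pi>(x := length ds)) y < length (ds @ [f']) \<and> (\<sigma>1(x:=f')) y = (ds @ [f']) ! (\<pi>(x := length ds)) y
          \<and> (\<sigma>2(x:=g)) y = (es @ [g]) ! (\<pi>(x := length ds)) y"
            using c[rule_format, of y] len by (cases "y = x") (auto simp: nth_append)
        qed
      show "force M2 u (\<sigma>2(x := g)) A" using IA[THEN conjunct1, rule_format, of t "ds @ [f']" u "es @ [g]" "\<pi>(x := length ds)" "\<sigma>1(x:=f')" "\<sigma>2(x:=g)"] f' c' f by auto
    qed
  qed
  have d2: "force M1 u \<sigma>1 (All x A)"
    if z: "Z21 t es u ds" and c: "\<forall>y\<in>fv (All x A). \<pi> y < length es \<and> \<sigma>2 y = es ! \<pi> y \<and> \<sigma>1 y = ds ! \<pi> y"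
      and f: "force M2 t \<sigma>2 (All x A)" for t ds u es \<sigma>1 \<sigma>2 \<pi>
  proof -
    have len: "length ds = length es" using z len21 by metis
    show ?thesis
    proof (simp, intro ballI)
      fix g assume g: "g \<in> Dom M1"
      obtain f' where f': "f' \<in> Dom M2" "Z21 t (es @ [f']) u (ds @ [g])" using all21 z g by blast
      have c': "\<forall>y\<in>fv A. (\<pi>(x := length es)) y < length (es @ [f']) \<and> (\<sigma>2(x:=f')) y = (es @ [f']) ! (\<pi>(x := length es)) y
          \<and> (\<sigma>1(x:=g)) y = (ds @ [g]) ! (\<pi>(x := length es)) y"
        proof
          fix y assume "y \<in> fv A"
          then show "(\<pi>(x := length es)) y < length (es @ [f']) \<and> (\<sigma>2(x:=f')) y = (es @ [f']) ! (\<pi>(x := length es)) y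
          \<and> (\<sigma>1(x:=g)) y = (ds @ [g]) ! (\<pi>(x := length es)) y"
            using c[rule_format, of y] len by (cases "y = x") (auto simp: nth_append)
        qed
      show "force M1 u (\<sigma>1(x := g)) A" using IA[THEN conjunct2, rule_format, of t "es @ [f']" u "ds @ [g]" "\<pi>(x := length es)" "\<sigma>2(x:=f')" "\<sigma>1(x:=g)"] f' c' f by auto
    qed
  qed
  show ?case using d1 d2 by blast
next
  case (Ex x A)
  have wA: "wf_fm ar A" using Ex.prems by auto
  note IA = Ex.IH[OF wA]
  have d1: "force M2 u \<sigma>2 (Ex x A)"
    if z: "Z12 t ds u es" and c: "\<forall>y\<in>fv (Ex x A). \<pi> y < length ds \<and> \<sigma>1 y = ds ! \<pi> y \<and> \<sigma>2 y = es ! \<pi> y"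
      and f: "force M1 t \<sigma>1 (Ex x A)" for t ds u es \<sigma>1 \<sigma>2 \<pi>
  proof -
    have len: "length ds = length es" using z len12 by blast
    obtain a where a: "a \<in> Dom M1" "force M1 t (\<sigma>1(x:=a)) A" using f by auto
    obtain g where g: "g \<in> Dom M2" "Z12 t (ds @ [a]) u (es @ [g])" using ex12 z a by blast
    have c': "\<forall>y\<in>fv A. (\<pi>(x := length ds)) y < length (ds @ [a]) \<and> (\<sigma>1(x:=a)) y = (ds @ [a]) ! (\<pi>(x := length ds)) y
        \<and> (\<sigma>2(x:=g)) y = (es @ [g]) ! (\<pi>(x := length ds)) y"
      proof
        fix y assume "y \<in> fv A"
        then show "(\<pi>(x := length ds)) y < length (ds @ [a]) \<and> (\<sigma>1(x:=a)) y = (ds @ [a]) ! (\<pi>(x := length ds)) y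
        \<and> (\<sigma>2(x:=g)) y = (es @ [g]) ! (\<pi>(x := length ds)) y"
          using c[rule_format, of y] len by (cases "y = x") (auto simp: nth_append)
      qed
    have "force M2 u (\<sigma>2(x := g)) A" using IA[THEN conjunct1, rule_format, of t "ds @ [a]" u "es @ [g]" "\<pi>(x := length ds)" "\<sigma>1(x:=a)" "\<sigma>2(x:=g)"] g c' a by auto
    then show ?thesis using g by auto
  qed
  have d2: "force M1 u \<sigma>1 (Ex x A)"
    if z: "Z21 t es u ds" and c: "\<forall>y\<in>fv (Ex x A). \<pi> y < length es \<and> \<sigma>2 y = es ! \<pi> y \<and> \<sigma>1 y = ds ! \<pi> y"
      and f: "force M2 t \<sigma>2 (Ex x A)" for t ds u es \<sigma>1 \<sigma>2 \<pi>
  proof -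
    have len: "length ds = length es" using z len21 by metis
    obtain a where a: "a \<in> Dom M2" "force M2 t (\<sigma>2(x:=a)) A" using f by auto
    obtain g where g: "g \<in> Dom M1" "Z21 t (es @ [a]) u (ds @ [g])" using ex21 z a by blast
    have c': "\<forall>y\<in>fv A. (\<pi>(x := length es)) y < length (es @ [a]) \<and> (\<sigma>2(x:=a)) y = (es @ [a]) ! (\<pi>(x := length es)) y
        \<and> (\<sigma>1(x:=g)) y = (ds @ [g]) ! (\<pi>(x := length es)) y"
      proof
        fix y assume "y \<in> fv A"
        then show "(\<pi>(x := length es)) y < length (es @ [a]) \<and> (\<sigma>2(x:=a)) y = (es @ [a]) ! (\<pi>(x := length es)) y
        \<and> (\<sigma>1(x:=g)) y = (ds @ [g]) ! (\<pi>(x := length es)) y"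
          using c[rule_format, of y] len by (cases "y = x") (auto simp: nth_append)
      qed
    have "force M1 u (\<sigma>1(x := g)) A" using IA[THEN conjunct2, rule_format, of t "es @ [a]" u "ds @ [g]" "\<pi>(x := length es)" "\<sigma>2(x:=a)" "\<sigma>1(x:=g)"] g c' a by auto
    then show ?thesis using g by auto
  qed
  show ?case using d1 d2 by blast
qed
qed

theorem lemma4p1:
  fixes ar :: "'p \<Rightarrow> nat"
    and M1 :: "('w1, 'd1, 'p) gmodel" and M2 :: "('w2, 'd2, 'p) gmodel"
    and Z12 :: "'w1 \<Rightarrow> 'd1 list \<Rightarrow> 'w2 \<Rightarrow> 'd2 list \<Rightarrow> bool"
    and Z21 :: "'w2 \<Rightarrow> 'd2 list \<Rightarrow> 'w1 \<Rightarrow> 'd1 list \<Rightarrow> bool"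
    and A :: "'p fm" and k :: nat
  assumes "is_gmodel ar M1" and "is_gmodel ar M2"
    and "cd_asimulation ar M1 M2 Z12 Z21"
    and "wf_fm ar A" and "fv A \<subseteq> {..<k}"
  shows "(\<forall>t ds u es. t \<in> W M1 \<longrightarrow> set ds \<subseteq> Dom M1 \<longrightarrow> length ds = k \<longrightarrow>
             u \<in> W M2 \<longrightarrow> set es \<subseteq> Dom M2 \<longrightarrow> length es = k \<longrightarrow>
             Z12 t ds u es \<longrightarrow> forces M1 t A ds \<longrightarrow> forces M2 u A es)
       \<and> (\<forall>t es u ds. t \<in> W M2 \<longrightarrow> set es \<subseteq> Dom M2 \<longrightarrow> length es = k \<longrightarrow>
             u \<in> W M1 \<longrightarrow> set ds \<subseteq> Dom M1 \<longrightarrow> length ds = k \<longrightarrow>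
             Z21 t es u ds \<longrightarrow> forces M2 t A es \<longrightarrow> forces M1 u A ds)"
proof -
  have H1: "asim_half ar M1 M2 Z12 Z21" and H2: "asim_half ar M2 M1 Z21 Z12"
    using assms(3) unfolding cd_asimulation_def by auto
  note G = gen[OF H1 H2 assms(4)]
  have fv: "\<forall>y\<in>fv A. y < k" using assms(5) by auto
  show ?thesis
  proof (rule conjI; intro allI impI)
    fix t ds u es
    assume "length ds = k" "Z12 t ds u es" "forces M1 t A ds"
    moreover have "\<forall>y\<in>fv A. id y < length ds \<and> ds ! y = ds ! id y \<and> es ! y = es ! id y"
      using fv \<open>length ds = k\<close> by auto
    ultimately show "forces M2 u A es" using G unfolding forces_def by blast
  next
    fix t es u ds
    assume "length es = k" "Z21 t es u ds" "forces M2 t A es"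
    moreover have "\<forall>y\<in>fv A. id y < length es \<and> es ! y = es ! id y \<and> ds ! y = ds ! id y"
      using fv \<open>length es = k\<close> by auto
    ultimately show "forces M1 u A ds" using G unfolding forces_def by blast
  qed
qed

end
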